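(* For every combinatorial auction with single-dimensional signals $s_i\in\{0,1,\dots,k-1\}$ ($k\ge2$ a power of $2$) and strong-SOS valuations, the mechanism $k$-SS is universally ex-post IC-IR and gives a $(2\log_2k+4)$-approximation to the optimal social welfare.
   Context: Setting: $n$ agents, $m$ items; agent $i$ has private signal $s_i$; value for bundle $T$ is $v_{iT}(\mathbf{s})\ge0$, public, weakly increasing in each coordinate, strictly in $s_i$. Strong-SOS: for every $j$, $\delta\ge0$, and profiles $\mathbf{s}'\le\mathbf{s}$ coordinate-wise, $v(\mathbf{s}'_{-j},s'_j+\delta)-v(\mathbf{s}'_{-j},s'_j)\ge v(\mathbf{s}_{-j},s_j+\delta)-v(\mathbf{s}_{-j},s_j)$; every $v_{iT}$ is strong-SOS. Allocations assign disjoint bundles. Random Bucket: choose $\ell$ uniformly in $\{1,\dots,\log_2k\}$; $N_{B_\ell}=\{i:s_i\ge2^{\ell-1}\}$; for $i\in N_{B_\ell}$, $\bar v_{iT}=v_{iT}(\mathbf{s}_{N_{\neg B_\ell}},\mathbf{2^{\ell-1}}_{N_{B_\ell}})$, else $0$; allocate a $\bar v$-welfare-maximizing allocation among $N_{B_\ell}$; agent receiving $\bar T_i$ pays $v_{i\bar T_i}(\mathbf{s}_{-i},2^{\ell-1}-1)$. Random Sampling: split agents uniformly at random into $A,B$; for $i\in B$, $\tilde v_{iT}=v_{iT}(\mathbf{s}_A,\mathbf{0}_B)$, for $i\in A$, $\tilde v_{iT}=0$; allocate a $\tilde v$-welfare-maximizing allocation among $B$; no payments. $k$-SS: run Random Bucket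 with probability $\frac{\log_2k}{\log_2k+2}$, otherwise Random Sampling. *)

theory Defs
  imports "HOL-Probability.Probability"
begin

text \<open>A valuation profile
  v i T s is the value of agent i for bundle T at signal profile s.\<close>

definition in_dom :: "nat \<Rightarrow> ('a \<Rightarrow> nat) \<Rightarrow> bool" where
  "in_dom k s \<longleftrightarrow> (\<forall>j. s j < k)"

definition weakly_incr_on :: "nat \<Rightarrow> (('a \<Rightarrow> nat) \<Rightarrow> real) \<Rightarrow> bool" where
  "weakly_incr_on k f \<longleftrightarrow>
     (\<forall>s j \<delta>. in_dom k s \<longrightarrow> s j + \<delta> < k \<longrightarrow> f s \<le> f (s(j := s j + \<delta>)))"

definition strictly_incr_in_on :: "nat \<Rightarrow> 'a \<Rightarrow> (('a \<Rightarrow> nat) \<Rightarrow> real) \<Rightarrow> bool" where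
  "strictly_incr_in_on k i f \<longleftrightarrow>
     (\<forall>s \<delta>. in_dom k s \<longrightarrow> 0 < \<delta> \<longrightarrow> s i + \<delta> < k \<longrightarrow> f s < f (s(i := s i + \<delta>)))"

definition strong_SOS_on :: "nat \<Rightarrow> (('a \<Rightarrow> nat) \<Rightarrow> real) \<Rightarrow> bool" where
  "strong_SOS_on k f \<longleftrightarrow>
     (\<forall>s s' j \<delta>. in_dom k s \<longrightarrow> (\<forall>i. s' i \<le> s i) \<longrightarrow> s j + \<delta> < k \<longrightarrow>
        f (s'(j := s' j + \<delta>)) - f s' \<ge> f (s(j := s j + \<delta>)) - f s)"

text \<open>Standing assumptions on the valuations.  Values of the empty bundle are
  normalised to 0 (strict monotonicity is therefore required for nonempty bundles).\<close>
definition valid_valuations :: "nat \<Rightarrow> ('a \<Rightarrow> 'b set \<Rightarrow> ('a \<Rightarrow> nat) \<Rightarrow> real) \<Rightarrow> bool" where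
  "valid_valuations k v \<longleftrightarrow>
     (\<forall>i T s. in_dom k s \<longrightarrow> 0 \<le> v i T s) \<and>
     (\<forall>i s. v i {} s = 0) \<and>
     (\<forall>i T. weakly_incr_on k (v i T)) \<and>
     (\<forall>i T. T \<noteq> {} \<longrightarrow> strictly_incr_in_on k i (v i T)) \<and>
     (\<forall>i T. strong_SOS_on k (v i T))"

definition is_alloc :: "('a \<Rightarrow> 'b set) \<Rightarrow> bool" where
  "is_alloc X \<longleftrightarrow> (\<forall>i j. i \<noteq> j \<longrightarrow> X i \<inter> X j = {})"

definition alloc_among :: "'a set \<Rightarrow> ('a \<Rightarrow> 'b set) \<Rightarrow> bool" where
  "alloc_among S X \<longleftrightarrow> is_alloc X \<and> (\<forall>i. i \<notin> S \<longrightarrow> X i = {})"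

definition welfare :: "('a \<Rightarrow> 'b set \<Rightarrow> real) \<Rightarrow> ('a \<Rightarrow> 'b set) \<Rightarrow> real" where
  "welfare w X = (\<Sum>i\<in>UNIV. w i (X i))"

definition opt_welfare ::
  "('a::finite \<Rightarrow> 'b::finite set \<Rightarrow> ('a \<Rightarrow> nat) \<Rightarrow> real) \<Rightarrow> ('a \<Rightarrow> nat) \<Rightarrow> real" where
  "opt_welfare v s = Max ((\<lambda>X. welfare (\<lambda>i T. v i T s) X) ` {X. is_alloc X})"

text \<open>A (deterministic) tie-breaking rule: sel S w is a w-welfare-maximizing
  allocation among the agents in S.\<close>
definition welfare_selector :: "('a set \<Rightarrow> ('a \<Rightarrow> 'b set \<Rightarrow> real) \<Rightarrow> ('a \<Rightarrow> 'b set)) \<Rightarrow> bool" where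
  "welfare_selector sel \<longleftrightarrow>
     (\<forall>S w. alloc_among S (sel S w) \<and>
            (\<forall>X. alloc_among S X \<longrightarrow> welfare w X \<le> welfare w (sel S w)))"

type_synonym ('a, 'b) outcome = "('a \<Rightarrow> 'b set) \<times> ('a \<Rightarrow> real)"

definition bucket_mech ::
  "('a set \<Rightarrow> ('a \<Rightarrow> 'b set \<Rightarrow> real) \<Rightarrow> ('a \<Rightarrow> 'b set)) \<Rightarrow>
   ('a \<Rightarrow> 'b set \<Rightarrow> ('a \<Rightarrow> nat) \<Rightarrow> real) \<Rightarrow> nat \<Rightarrow> ('a \<Rightarrow> nat) \<Rightarrow> ('a, 'b) outcome" where
  "bucket_mech sel v l s =
     (let t = 2 ^ (l - 1);
          NB = {i. t \<le> s i};
          sbar = (\<lambda>j. if j \<in> NB then t else s j);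
          vbar = (\<lambda>i T. if i \<in> NB then v i T sbar else 0);
          X = sel NB vbar
      in (X, \<lambda>i. if i \<in> NB then v i (X i) (s(i := t - 1)) else 0))"

definition sampling_mech ::
  "('a set \<Rightarrow> ('a \<Rightarrow> 'b set \<Rightarrow> real) \<Rightarrow> ('a \<Rightarrow> 'b set)) \<Rightarrow>
   ('a \<Rightarrow> 'b set \<Rightarrow> ('a \<Rightarrow> nat) \<Rightarrow> real) \<Rightarrow> 'a set \<Rightarrow> ('a \<Rightarrow> nat) \<Rightarrow> ('a, 'b) outcome" where
  "sampling_mech sel v A s =
     (let sA = (\<lambda>j. if j \<in> A then s j else 0);
          vt = (\<lambda>i T. if i \<notin> A then v i T sA else 0);
          X = sel (- A) vt
      in (X, \<lambda>i. 0))"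

definition log2nat :: "nat \<Rightarrow> nat" where
  "log2nat k = nat \<lfloor>log 2 (real k)\<rfloor>"

text \<open>The random coins of k-SS (drawn independently of the reports):
  Inl l = Random Bucket with bucket l (uniform in {1..log2 k}),
  Inr A = Random Sampling with A the sampled side (uniform subset, B = -A).\<close>
definition kSS_coins :: "nat \<Rightarrow> (nat + 'a::finite set) pmf" where
  "kSS_coins k =
     bind_pmf (bernoulli_pmf (real (log2nat k) / (real (log2nat k) + 2)))
       (\<lambda>b. if b then map_pmf Inl (pmf_of_set {1..log2nat k})
             else map_pmf Inr (pmf_of_set UNIV))"

definition kSS_mech ::
  "('a set \<Rightarrow> ('a \<Rightarrow> 'b set \<Rightarrow> real) \<Rightarrow> ('a \<Rightarrow> 'b set)) \<Rightarrow>
   ('a \<Rightarrow> 'b set \<Rightarrow> ('a \<Rightarrow> nat) \<Rightarrow> real) \<Rightarrow> nat + 'a set \<Rightarrow> ('a \<Rightarrow> nat) \<Rightarrow> ('a, 'b) outcome" where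
  "kSS_mech sel v c s =
     (case c of Inl l \<Rightarrow> bucket_mech sel v l s | Inr A \<Rightarrow> sampling_mech sel v A s)"

definition utility ::
  "('a \<Rightarrow> 'b set \<Rightarrow> ('a \<Rightarrow> nat) \<Rightarrow> real) \<Rightarrow> ('a \<Rightarrow> nat) \<Rightarrow> 'a \<Rightarrow> ('a, 'b) outcome \<Rightarrow> real" where
  "utility v s i o' = v i (fst o' i) s - snd o' i"

definition ex_post_IC_IR ::
  "nat \<Rightarrow> ('a \<Rightarrow> 'b set \<Rightarrow> ('a \<Rightarrow> nat) \<Rightarrow> real) \<Rightarrow> (('a \<Rightarrow> nat) \<Rightarrow> ('a, 'b) outcome) \<Rightarrow> bool" where
  "ex_post_IC_IR k v M \<longleftrightarrow>
     (\<forall>s i. in_dom k s \<longrightarrow>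
        0 \<le> utility v s i (M s) \<and>
        (\<forall>r < k. utility v s i (M (s(i := r))) \<le> utility v s i (M s)))"

end

theory Submission
  imports Defs
begin


definition upd :: "('a \<Rightarrow> nat) \<Rightarrow> 'a set \<Rightarrow> ('a \<Rightarrow> nat) \<Rightarrow> ('a \<Rightarrow> nat)" where
  "upd p C s = (\<lambda>j. if j \<in> C then s j else p j)"

lemma mono_gen:
  fixes f :: "('a::finite \<Rightarrow> nat) \<Rightarrow> real"
  assumes wi: "weakly_incr_on k f" and q: "in_dom k q" and le: "\<forall>j. p j \<le> q j"
  shows "f p \<le> f q"
proof -
  have "finite C \<Longrightarrow> f p \<le> f (upd p C q)" for C :: "'a set"
  proof (induction C rule: finite_induct)
    case empty thus ?case by (simp add: upd_def)
  next
    case (insert x C)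
    let ?b = "upd p C q"
    have dom: "in_dom k ?b" using q le unfolding in_dom_def upd_def
      by (auto intro: le_less_trans)
    have eq: "upd p (insert x C) q = ?b(x := ?b x + (q x - p x))"
      using insert.hyps le by (auto simp: upd_def fun_eq_iff)
    have "?b x + (q x - p x) < k" using q le insert.hyps unfolding in_dom_def upd_def
      by (metis le_add_diff_inverse)
    hence "f ?b \<le> f (?b(x := ?b x + (q x - p x)))" using wi dom unfolding weakly_incr_on_def by blast
    thus ?case using insert.IH unfolding eq by linarith
  qed
  from this[of UNIV] show ?thesis by (simp add: upd_def)
qed

lemma sos_gen:
  fixes f :: "('a::finite \<Rightarrow> nat) \<Rightarrow> real"
  assumes sos: "strong_SOS_on k f" and p: "in_dom k p" and s: "in_dom k s"
    and le: "\<forall>j. p' j \<le> p j"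
  shows "finite C \<Longrightarrow> (\<forall>j\<in>C. p' j = p j \<and> p j \<le> s j) \<Longrightarrow>
     f (upd p C s) - f p \<le> f (upd p' C s) - f p'"
proof (induction C rule: finite_induct)
  case empty thus ?case by (simp add: upd_def)
next
  case (insert x C)
  let ?b = "upd p C s" and ?b' = "upd p' C s" and ?d = "s x - p x"
  have dom: "in_dom k ?b" using p s unfolding in_dom_def upd_def by auto
  have bl: "\<forall>j. ?b' j \<le> ?b j" using le by (auto simp: upd_def)
  have bx: "?b x = p x" "?b' x = p x" using insert by (auto simp: upd_def)
  have lt: "?b x + ?d < k" using s insert.prems bx unfolding in_dom_def by auto
  have "f (?b'(x := ?b' x + ?d)) - f ?b' \<ge> f (?b(x := ?b x + ?d)) - f ?b"
    using sos dom bl lt unfolding strong_SOS_on_def by blast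
  moreover have "upd p (insert x C) s = ?b(x := ?b x + ?d)"
    using insert bx by (auto simp: upd_def fun_eq_iff)
  moreover have "upd p' (insert x C) s = ?b'(x := ?b' x + ?d)"
    using insert bx by (auto simp: upd_def fun_eq_iff)
  moreover have "f ?b - f p \<le> f ?b' - f p'" using insert by auto
  ultimately show ?case by (smt (verit))
qed



lemma vv_nonneg: "valid_valuations k v \<Longrightarrow> in_dom k s \<Longrightarrow> 0 \<le> v i T s"
  by (simp add: valid_valuations_def)
lemma vv_empty: "valid_valuations k v \<Longrightarrow> v i {} s = 0"
  by (simp add: valid_valuations_def)
lemma vv_mono:
  fixes v :: "'a::finite \<Rightarrow> 'b set \<Rightarrow> ('a \<Rightarrow> nat) \<Rightarrow> real"
  shows "valid_valuations k v \<Longrightarrow> in_dom k q \<Longrightarrow> \<forall>j. p j \<le> q j \<Longrightarrow> v i T p \<le> v i T q"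
  by (rule mono_gen[where k=k]) (auto simp: valid_valuations_def)
lemma vv_sos: "valid_valuations k v \<Longrightarrow> strong_SOS_on k (v i T)"
  by (simp add: valid_valuations_def)

lemma sel_among: "welfare_selector sel \<Longrightarrow> i \<notin> S \<Longrightarrow> sel S w i = {}"
  by (simp add: welfare_selector_def alloc_among_def)

lemma bucket_util_low:
  assumes V: "valid_valuations k v" and S: "welfare_selector sel"
    and "r i < 2^(l-1)"
  shows "utility v s i (bucket_mech sel v l r) = 0"
  using assms sel_among[OF S] vv_empty[OF V]
  by (simp add: bucket_mech_def Let_def utility_def)

lemma bucket_util_high:
  assumes "2^(l-1) \<le> r i"
  shows "utility v s i (bucket_mech sel v l r) =
     v i (fst (bucket_mech sel v l r) i) s - v i (fst (bucket_mech sel v l r) i) (r(i := 2^(l-1) - 1))"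
  using assms by (simp add: bucket_mech_def Let_def utility_def)

lemma bucket_util_same:
  assumes "2^(l-1) \<le> r" "2^(l-1) \<le> s i"
  shows "utility v s i (bucket_mech sel v l (s(i:=r))) = utility v s i (bucket_mech sel v l s)"
proof -
  let ?t = "2^(l-1) :: nat"
  have nb: "{j. ?t \<le> (s(i:=r)) j} = {j. ?t \<le> s j}" using assms by auto
  have sb: "(\<lambda>j. if j \<in> {j. ?t \<le> s j} then ?t else (s(i:=r)) j) = (\<lambda>j. if j \<in> {j. ?t \<le> s j} then ?t else s j)"
    using assms by auto
  show ?thesis using assms unfolding bucket_mech_def Let_def utility_def nb sb by simp
qed

lemma bucket_IC:
  fixes v :: "'a::finite \<Rightarrow> 'b set \<Rightarrow> ('a \<Rightarrow> nat) \<Rightarrow> real"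
  assumes V: "valid_valuations k v" and S: "welfare_selector sel"
    and l: "2^(l-1) < k"
  shows "ex_post_IC_IR k v (bucket_mech sel v l)"
  unfolding ex_post_IC_IR_def
proof (intro allI impI conjI)
  fix s :: "'a \<Rightarrow> nat" and i assume s: "in_dom k s"
  let ?t = "2^(l-1) :: nat"
  have tr: "0 \<le> utility v s i (bucket_mech sel v l s)"
  proof (cases "?t \<le> s i")
    case True
    have "v i T (s(i := ?t - 1)) \<le> v i T s" for T
      by (rule vv_mono[OF V s]) (use True in auto)
    then show ?thesis using bucket_util_high[of l s i v s sel] True by simp
  next
    case False then show ?thesis using bucket_util_low[OF V S] by simp
  qed
  show "0 \<le> utility v s i (bucket_mech sel v l s)" by (fact tr)
    fix r assume r: "r < k"
    show "utility v s i (bucket_mech sel v l (s(i := r))) \<le> utility v s i (bucket_mech sel v l s)"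
    proof (cases "?t \<le> r")
      case False
      then have "utility v s i (bucket_mech sel v l (s(i := r))) = 0"
        using bucket_util_low[OF V S, of "s(i:=r)" i l] by simp
      then show ?thesis using tr by simp
    next
      case True
      show ?thesis
      proof (cases "?t \<le> s i")
        case True2: True
        show ?thesis using bucket_util_same[of l r s i v sel] True True2 by simp
      next
        case False
        have d: "in_dom k (s(i := ?t - 1))" using s l unfolding in_dom_def by auto
        have "v i T s \<le> v i T (s(i := ?t - 1))" for T
          by (rule vv_mono[OF V d]) (use False in auto)
        then have "utility v s i (bucket_mech sel v l (s(i := r))) \<le> 0"
          using bucket_util_high[of l "s(i:=r)" i v s sel] True by simp
        then show ?thesis using tr by simp
      qed
    qed
qed

lemma sampling_IC:
  fixes v :: "'a::finite \<Rightarrow> 'b set \<Rightarrow> ('a \<Rightarrow> nat) \<Rightarrow> real"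
  assumes V: "valid_valuations k v" and S: "welfare_selector sel"
  shows "ex_post_IC_IR k v (sampling_mech sel v A)"
  unfolding ex_post_IC_IR_def
proof (intro allI impI conjI)
  fix s :: "'a \<Rightarrow> nat" and i assume s: "in_dom k s"
  show "0 \<le> utility v s i (sampling_mech sel v A s)"
    using vv_nonneg[OF V s] by (simp add: sampling_mech_def Let_def utility_def)
    fix r assume r: "r < k"
    show "utility v s i (sampling_mech sel v A (s(i := r))) \<le> utility v s i (sampling_mech sel v A s)"
    proof (cases "i \<in> A")
      case True
      then show ?thesis using sel_among[OF S] vv_empty[OF V]
        by (simp add: sampling_mech_def Let_def utility_def)
    next
      case False
      have "(\<lambda>j. if j \<in> A then (s(i:=r)) j else 0) = (\<lambda>j. if j \<in> A then s j else 0)"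
        using False by auto
      then show ?thesis by (simp add: sampling_mech_def Let_def utility_def)
    qed
qed

lemma log2nat_pow: "log2nat (2^L) = L"
  unfolding log2nat_def by (simp add: log_nat_power)



lemma sos_apply:
  "strong_SOS_on k f \<Longrightarrow> in_dom k s \<Longrightarrow> \<forall>i. s' i \<le> s i \<Longrightarrow> s j + \<delta> < k \<Longrightarrow>
    f (s(j := s j + \<delta>)) - f s \<le> f (s'(j := s' j + \<delta>)) - f s'"
  unfolding strong_SOS_on_def by blast

lemma agent_bucket:
  fixes f :: "('a::finite \<Rightarrow> nat) \<Rightarrow> real"
  assumes wi: "weakly_incr_on k f" and sos: "strong_SOS_on k f"
    and nn: "\<And>q. in_dom k q \<Longrightarrow> 0 \<le> f q"
    and s: "in_dom k s" and ti: "t \<le> s i" "s i < 2 * t"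
    and sb: "\<forall>j. sb j \<le> s j" "sb i = t"
  shows "f s - f (s(i:=0)) \<le> 2 * f sb"
proof -
  let ?d = "s i - t"
  have sik: "s i < k" using s unfolding in_dom_def by blast
  have dt1: "in_dom k (s(i:=t))" using s ti sik unfolding in_dom_def by (simp add: le_less_trans[OF ti(1) sik])
  have dt2: "in_dom k (s(i:=0))" using s sik unfolding in_dom_def by (simp add: le_less_trans[OF _ sik])
  have le1: "\<forall>j. (s(i:=0)) j \<le> (s(i:=t)) j" by simp
  have a: "f ((s(i:=t))(i := (s(i:=t)) i + ?d)) - f (s(i:=t))
      \<le> f ((s(i:=0))(i := (s(i:=0)) i + ?d)) - f (s(i:=0))"
    by (rule sos_apply[OF sos dt1 le1]) (use ti sik in simp)
  have e1: "(s(i:=t))(i := (s(i:=t)) i + ?d) = s" using ti by auto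
  have e2: "(s(i:=0))(i := (s(i:=0)) i + ?d) = s(i:=?d)" by simp
  have b: "f (s(i:=?d)) \<le> f (s(i:=t))"
    by (rule mono_gen[OF wi dt1]) (use ti in auto)
  have le2: "\<forall>j. (sb(i:=0)) j \<le> (s(i:=0)) j" using sb by simp
  have c: "f ((s(i:=0))(i := (s(i:=0)) i + t)) - f (s(i:=0))
      \<le> f ((sb(i:=0))(i := (sb(i:=0)) i + t)) - f (sb(i:=0))"
    by (rule sos_apply[OF sos dt2 le2]) (use ti sik in simp)
  have e3: "(sb(i:=0))(i := (sb(i:=0)) i + t) = sb" using sb by auto
  have e4: "(s(i:=0))(i := (s(i:=0)) i + t) = s(i:=t)" by simp
  have dsb: "in_dom k (sb(i:=0))" using dt2 le2 unfolding in_dom_def using le_less_trans by blast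
  have d: "0 \<le> f (sb(i:=0))" using nn[OF dsb] .
  from a have a': "f s - f (s(i:=t)) \<le> f (s(i:=?d)) - f (s(i:=0))" unfolding e1 e2 .
  from c have c': "f (s(i:=t)) - f (s(i:=0)) \<le> f sb - f (sb(i:=0))" unfolding e3 e4 .
  show ?thesis using a' b c' d by linarith
qed

lemma agent_sampling:
  fixes f :: "('a::finite \<Rightarrow> nat) \<Rightarrow> real"
  assumes sos: "strong_SOS_on k f"
    and nn: "\<And>q. in_dom k q \<Longrightarrow> 0 \<le> f q"
    and s: "in_dom k s" and AB: "A \<inter> B = {}" "A \<union> B = - {i}"
  shows "f (s(i:=0)) \<le> f (\<lambda>j. if j \<in> A then s j else 0) + f (\<lambda>j. if j \<in> B then s j else 0)"
proof -
  let ?pB = "\<lambda>j. if j \<in> B then s j else 0" and ?z = "\<lambda>j::'a. 0::nat"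
  have pd: "in_dom k ?pB" using s unfolding in_dom_def by auto
  have h: "f (upd ?pB A s) - f ?pB \<le> f (upd ?z A s) - f ?z"
    by (rule sos_gen[OF sos pd s]) (use AB in auto)
  have e1: "upd ?pB A s = s(i:=0)" using AB by (auto simp: upd_def fun_eq_iff)
  have e2: "upd ?z A s = (\<lambda>j. if j \<in> A then s j else 0)" by (auto simp: upd_def)
  have z: "0 \<le> f ?z" using nn s unfolding in_dom_def by (metis gr_implies_not0 not_gr0)
  from h have "f (s(i:=0)) - f ?pB \<le> f (\<lambda>j. if j \<in> A then s j else 0) - f ?z"
    unfolding e1 e2 .
  with z show ?thesis by linarith
qed



lemma vv_wi: "valid_valuations k v \<Longrightarrow> weakly_incr_on k (v i T)"
  by (simp add: valid_valuations_def)

lemma bucket_welfare: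
  fixes v :: "'a::finite \<Rightarrow> 'b::finite set \<Rightarrow> ('a \<Rightarrow> nat) \<Rightarrow> real"
  assumes V: "valid_valuations k v" and S: "welfare_selector sel"
    and s: "in_dom k s" and Xs: "is_alloc Xs"
  shows "(\<Sum>i\<in>UNIV. if 2^(l-1) \<le> s i \<and> s i < 2 * 2^(l-1)
            then (v i (Xs i) s - v i (Xs i) (s(i:=0))) / 2 else 0)
     \<le> welfare (\<lambda>i T. v i T s) (fst (bucket_mech sel v l s))"
proof -
  define t :: nat where "t = 2^(l-1)"
  define NB where "NB = {i. t \<le> s i}"
  define sbar where "sbar = (\<lambda>j. if j \<in> NB then t else s j)"
  define vbar where "vbar = (\<lambda>i T. if i \<in> NB then v i T sbar else 0)"
  define X where "X = sel NB vbar"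
  define Y where "Y = (\<lambda>i. if t \<le> s i \<and> s i < 2 * t then Xs i else {})"
  have Xeq: "fst (bucket_mech sel v l s) = X"
    unfolding X_def vbar_def sbar_def NB_def t_def bucket_mech_def Let_def by simp
  have sbl: "\<forall>j. sbar j \<le> s j" unfolding sbar_def NB_def by auto
  have dsb: "in_dom k sbar" using s sbl unfolding in_dom_def using le_less_trans by blast
  have vbn: "0 \<le> vbar i T" for i T unfolding vbar_def using vv_nonneg[OF V dsb] by simp
  have h1: "welfare vbar X \<le> welfare (\<lambda>i T. v i T s) X"
    unfolding welfare_def
  proof (rule sum_mono)
    fix i
    show "vbar i (X i) \<le> v i (X i) s"
      using vv_mono[OF V s sbl] vv_nonneg[OF V s] unfolding vbar_def by simp
  qed
  have aY: "alloc_among NB Y" using Xs unfolding alloc_among_def is_alloc_def Y_def NB_def by auto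
  have h2: "welfare vbar Y \<le> welfare vbar X"
    using S aY unfolding welfare_selector_def X_def by blast
  have h3: "(\<Sum>i\<in>UNIV. if t \<le> s i \<and> s i < 2 * t
            then (v i (Xs i) s - v i (Xs i) (s(i:=0))) / 2 else 0) \<le> welfare vbar Y"
    unfolding welfare_def
  proof (rule sum_mono)
    fix i
    show "(if t \<le> s i \<and> s i < 2 * t then (v i (Xs i) s - v i (Xs i) (s(i:=0))) / 2 else 0) \<le> vbar i (Y i)"
    proof (cases "t \<le> s i \<and> s i < 2 * t")
      case True
      have "sbar i = t" using True unfolding sbar_def NB_def by simp
      then have "v i (Xs i) s - v i (Xs i) (s(i:=0)) \<le> 2 * v i (Xs i) sbar"
        using agent_bucket[where f="v i (Xs i)", OF vv_wi[OF V] vv_sos[OF V] vv_nonneg[OF V] s _ _ sbl, of t i] True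
        by simp
      moreover have "vbar i (Y i) = v i (Xs i) sbar" using True unfolding vbar_def Y_def NB_def by simp
      ultimately show ?thesis using True by simp
    next
      case False
      have "(if t \<le> s i \<and> s i < 2 * t then (v i (Xs i) s - v i (Xs i) (s(i:=0))) / 2 else 0) = 0"
        using False by (rule if_not_P)
      then show ?thesis using vbn[of i "Y i"] by linarith
    qed
  qed
  show ?thesis using h1 h2 h3 unfolding Xeq t_def by linarith
qed

lemma sampling_welfare:
  fixes v :: "'a::finite \<Rightarrow> 'b::finite set \<Rightarrow> ('a \<Rightarrow> nat) \<Rightarrow> real"
  assumes V: "valid_valuations k v" and S: "welfare_selector sel"
    and s: "in_dom k s" and Xs: "is_alloc Xs"
  shows "(\<Sum>i\<in>UNIV. if i \<notin> A then v i (Xs i) (\<lambda>j. if j \<in> A then s j else 0) else 0)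
     \<le> welfare (\<lambda>i T. v i T s) (fst (sampling_mech sel v A s))"
proof -
  define sA where "sA = (\<lambda>j. if j \<in> A then s j else 0)"
  define vt where "vt = (\<lambda>i T. if i \<notin> A then v i T sA else 0)"
  define X where "X = sel (- A) vt"
  define Y where "Y = (\<lambda>i. if i \<notin> A then Xs i else {})"
  have Xeq: "fst (sampling_mech sel v A s) = X"
    unfolding X_def vt_def sA_def sampling_mech_def Let_def by simp
  have sal: "\<forall>j. sA j \<le> s j" unfolding sA_def by auto
  have h1: "welfare vt X \<le> welfare (\<lambda>i T. v i T s) X"
    unfolding welfare_def
  proof (rule sum_mono)
    fix i
    show "vt i (X i) \<le> v i (X i) s"
      using vv_mono[OF V s sal] vv_nonneg[OF V s] unfolding vt_def by simp
  qed
  have aY: "alloc_among (- A) Y" using Xs unfolding alloc_among_def is_alloc_def Y_def by auto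
  have h2: "welfare vt Y \<le> welfare vt X"
    using S aY unfolding welfare_selector_def X_def by blast
  have h3: "(\<Sum>i\<in>UNIV. if i \<notin> A then v i (Xs i) sA else 0) = welfare vt Y"
    unfolding welfare_def vt_def Y_def by (rule sum.cong) auto
  show ?thesis using h1 h2 h3 unfolding Xeq sA_def by linarith
qed



lemma exists_bucket:
  "1 \<le> (x::nat) \<Longrightarrow> x < 2^L \<Longrightarrow> \<exists>l\<in>{1..L}. 2^(l-1) \<le> x \<and> x < 2 * 2^(l-1)"
proof (induction L)
  case 0 then show ?case by simp
next
  case (Suc L)
  show ?case
  proof (cases "x < 2^L")
    case True
    then obtain l where "l \<in> {1..L}" "2^(l-1) \<le> x \<and> x < 2 * 2^(l-1)" using Suc by blast
    then show ?thesis by (intro bexI[of _ l]) auto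
  next
    case False
    then show ?thesis using Suc.prems by (intro bexI[of _ "Suc L"]) auto
  qed
qed

lemma pmf_Inl: "pmf (map_pmf Inr M) (Inl l) = 0"
  by (auto simp add: pmf_eq_0_set_pmf)
lemma pmf_Inr: "pmf (map_pmf Inl M) (Inr l) = 0"
  by (auto simp add: pmf_eq_0_set_pmf)

lemma kSS_expectation:
  fixes F :: "nat + 'a::finite set \<Rightarrow> real"
  assumes L: "log2nat k = L" "1 \<le> L"
  shows "measure_pmf.expectation (kSS_coins k) F
     = (\<Sum>l\<in>{1..L}. F (Inl l)) / (real L + 2)
       + (\<Sum>A\<in>UNIV. F (Inr A)) * (2 / (real L + 2)) / real (card (UNIV :: 'a set set))"
proof -
  define p where "p = real L / (real L + 2)"
  have p01: "0 \<le> p" "p \<le> 1" unfolding p_def by auto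
  have K: "kSS_coins k = bind_pmf (bernoulli_pmf p)
       (\<lambda>b. if b then map_pmf Inl (pmf_of_set {1..L}) else map_pmf Inr (pmf_of_set (UNIV :: 'a set set)))"
    unfolding kSS_coins_def p_def L(1) ..
  define Cs where "Cs = Inl ` {1..L} \<union> Inr ` (UNIV :: 'a set set)"
  have fin: "finite Cs" unfolding Cs_def by simp
  have ne: "{1..L} \<noteq> {}" using L by simp
  have sub: "a \<in> Cs" if "a \<in> set_pmf (kSS_coins k)" for a
    using that ne unfolding K Cs_def by (auto split: if_splits)
  have pl: "pmf (kSS_coins k :: (nat + 'a set) pmf) (Inl l) = p / real L" if "l \<in> {1..L}" for l
    unfolding K pmf_bind using p01 that ne
    by (simp add: pmf_map_inj' pmf_Inl)
  have pr: "pmf (kSS_coins k) (Inr (A :: 'a set)) = (1 - p) / real (card (UNIV :: 'a set set))" for A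
    unfolding K pmf_bind using p01
    by (simp add: pmf_map_inj' pmf_Inr)
  have "measure_pmf.expectation (kSS_coins k) F = (\<Sum>a\<in>Cs. F a * pmf (kSS_coins k) a)"
    by (rule integral_measure_pmf_real[OF fin]) (use sub in blast)
  also have "\<dots> = (\<Sum>a\<in>Inl ` {1..L}. F a * pmf (kSS_coins k) a) + (\<Sum>a\<in>Inr ` (UNIV :: 'a set set). F a * pmf (kSS_coins k) a)"
    unfolding Cs_def by (rule sum.union_disjoint) auto
  also have "\<dots> = (\<Sum>l\<in>{1..L}. F (Inl l) * (p / real L)) + (\<Sum>A\<in>UNIV. F (Inr A) * ((1 - p) / real (card (UNIV :: 'a set set))))"
    by (simp add: sum.reindex pl pr)
  also have "\<dots> = (\<Sum>l\<in>{1..L}. F (Inl l)) / (real L + 2)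
       + (\<Sum>A\<in>UNIV. F (Inr A)) * (2 / (real L + 2)) / real (card (UNIV :: 'a set set))"
  proof -
    have "p / real L = 1 / (real L + 2)" proof -
      have "0 < real L" using L(2) by simp
      then have "0 < real L * real L + real L * 2" by (simp add: add_pos_pos)
      with \<open>0 < real L\<close> show ?thesis unfolding p_def by (simp add: field_simps)
    qed
    moreover have "1 - p = 2 / (real L + 2)" unfolding p_def by (simp add: field_simps)
    ultimately show ?thesis unfolding sum_distrib_right[symmetric] by simp
  qed
  finally show ?thesis .
qed



lemma card_Sx: "card (UNIV :: 'a::finite set set) = 2 * card {A::'a set. i \<notin> A}"
proof -
  have "{A::'a set. i \<notin> A} = Pow (- {i})" by auto
  then have "card {A::'a set. i \<notin> A} = 2 ^ card (- {i})" by (simp add: card_Pow)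
  moreover have "card (- {i}) = CARD('a) - 1" using card_Diff_singleton[of i UNIV] by (simp add: Compl_eq_Diff_UNIV)
  moreover have "card (UNIV :: 'a set set) = 2 ^ CARD('a)"
    by (metis Pow_UNIV card_Pow finite_class.finite_UNIV)
  moreover have "CARD('a) \<ge> 1" by (simp add: Suc_leI)
  ultimately show ?thesis by (metis Suc_diff_1 less_le_trans power_Suc zero_less_one)
qed

lemma sampling_sum:
  fixes f :: "('a::finite \<Rightarrow> nat) \<Rightarrow> real"
  assumes sos: "strong_SOS_on k f"
    and nn: "\<And>q. in_dom k q \<Longrightarrow> 0 \<le> f q"
    and s: "in_dom k s"
  shows "real (card (UNIV::'a set set)) / 4 * f (s(i:=0))
     \<le> (\<Sum>A\<in>UNIV. if i \<notin> A then f (\<lambda>j. if j \<in> A then s j else 0) else 0)"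
proof -
  define Sx where "Sx = {A::'a set. i \<notin> A}"
  define g where "g = (\<lambda>A. f (\<lambda>j. if j \<in> A then s j else 0))"
  define \<phi> where "\<phi> = (\<lambda>A::'a set. - insert i A)"
  have e0: "(\<Sum>A\<in>UNIV. if i \<notin> A then f (\<lambda>j. if j \<in> A then s j else 0) else 0) = sum g Sx"
  proof -
    have "sum g {A \<in> UNIV. i \<notin> A} = (\<Sum>A\<in>UNIV. if i \<notin> A then g A else 0)"
      by (rule sum.inter_filter) simp
    then show ?thesis unfolding Sx_def g_def by simp
  qed
  have inv: "\<phi> (\<phi> A) = A" if "A \<in> Sx" for A using that unfolding \<phi>_def Sx_def by auto
  have inS: "\<phi> A \<in> Sx" for A unfolding \<phi>_def Sx_def by auto
  have e1: "sum g Sx = sum (\<lambda>A. g (\<phi> A)) Sx"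
    by (rule sum.reindex_bij_witness[of Sx \<phi> \<phi>]) (use inv inS in auto)
  have pair: "f (s(i:=0)) \<le> g A + g (\<phi> A)" if "A \<in> Sx" for A
    unfolding g_def
    by (rule agent_sampling[OF sos nn s]) (use that in \<open>auto simp: \<phi>_def Sx_def\<close>)
  have "real (card Sx) * f (s(i:=0)) = (\<Sum>A\<in>Sx. f (s(i:=0)))" by simp
  also have "\<dots> \<le> (\<Sum>A\<in>Sx. g A + g (\<phi> A))" by (rule sum_mono) (rule pair)
  also have "\<dots> = 2 * sum g Sx" using e1 by (simp add: sum.distrib)
  finally have "real (card Sx) * f (s(i:=0)) \<le> 2 * sum g Sx" .
  moreover have "real (card (UNIV::'a set set)) = 2 * real (card Sx)"
    unfolding Sx_def using card_Sx[of i] by simp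
  ultimately show ?thesis unfolding e0 by simp
qed

lemma bucket_sum:
  fixes D :: "'a::finite \<Rightarrow> real" and s :: "'a \<Rightarrow> nat"
  assumes Dn: "\<And>i. 0 \<le> D i" and D0: "\<And>i. s i = 0 \<Longrightarrow> D i = 0"
    and sk: "\<And>i. s i < 2^L"
  shows "(\<Sum>i\<in>UNIV. D i / 2) \<le> (\<Sum>l\<in>{1..L}. \<Sum>i\<in>UNIV. if 2^(l-1) \<le> s i \<and> s i < 2 * 2^(l-1) then D i / 2 else 0)"
proof -
  have "(\<Sum>i\<in>UNIV. D i / 2) \<le> (\<Sum>i\<in>UNIV. \<Sum>l\<in>{1..L}. if 2^(l-1) \<le> s i \<and> s i < 2 * 2^(l-1) then D i / 2 else 0)"
  proof (rule sum_mono)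
    fix i
    have nnt: "\<forall>l\<in>{1..L}. 0 \<le> (if 2^(l-1) \<le> s i \<and> s i < 2 * 2^(l-1) then D i / 2 else 0)"
      using Dn[of i] by simp
    show "D i / 2 \<le> (\<Sum>l\<in>{1..L}. if 2^(l-1) \<le> s i \<and> s i < 2 * 2^(l-1) then D i / 2 else 0)"
    proof (cases "s i = 0")
      case True then show ?thesis using D0[OF True] nnt by (simp add: sum_nonneg)
    next
      case False
      then obtain l where l: "l \<in> {1..L}" "2^(l-1) \<le> s i \<and> s i < 2 * 2^(l-1)"
        using exists_bucket[of "s i" L] sk[of i] by auto
      have "D i / 2 = (if 2^(l-1) \<le> s i \<and> s i < 2 * 2^(l-1) then D i / 2 else 0)" using l by simp
      also have "\<dots> \<le> (\<Sum>l\<in>{1..L}. if 2^(l-1) \<le> s i \<and> s i < 2 * 2^(l-1) then D i / 2 else 0)"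
        by (rule member_le_sum[OF l(1)]) (use nnt in auto)
      finally show ?thesis .
    qed
  qed
  also have "\<dots> = (\<Sum>l\<in>{1..L}. \<Sum>i\<in>UNIV. if 2^(l-1) \<le> s i \<and> s i < 2 * 2^(l-1) then D i / 2 else 0)"
    by (rule sum.swap)
  finally show ?thesis .
qed



theorem mainTheorem10:
  fixes v :: "'a::finite \<Rightarrow> 'b::finite set \<Rightarrow> ('a \<Rightarrow> nat) \<Rightarrow> real"
    and sel :: "'a set \<Rightarrow> ('a \<Rightarrow> 'b set \<Rightarrow> real) \<Rightarrow> ('a \<Rightarrow> 'b set)"
    and k :: nat
  assumes "k \<ge> 2" and "\<exists>L::nat. k = 2 ^ L"
    and "valid_valuations k v"
    and "welfare_selector sel"
  shows "(\<forall>c \<in> set_pmf (kSS_coins k). ex_post_IC_IR k v (kSS_mech sel v c))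
       \<and> (\<forall>s. in_dom k s \<longrightarrow>
            opt_welfare v s / (2 * log 2 (real k) + 4)
              \<le> measure_pmf.expectation (kSS_coins k)
                   (\<lambda>c. welfare (\<lambda>i T. v i T s) (fst (kSS_mech sel v c s))))"
proof -
  note V = assms(3) and S = assms(4)
  obtain L where kL: "k = 2 ^ L" using assms(2) by blast
  have L1: "1 \<le> L" using assms(1) kL by (cases L) auto
  have lg: "log2nat k = L" using kL log2nat_pow by simp
  have ne: "{1..L} \<noteq> {}" using L1 by simp
  have coins: "(\<exists>l\<in>{1..L}. c = Inl l) \<or> (\<exists>A. c = Inr A)" if "c \<in> set_pmf (kSS_coins k :: (nat + 'a set) pmf)" for c
    using that ne unfolding kSS_coins_def lg by (auto split: if_splits)
  have part1: "\<forall>c \<in> set_pmf (kSS_coins k). ex_post_IC_IR k v (kSS_mech sel v c)"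
  proof
    fix c :: "nat + 'a set" assume c: "c \<in> set_pmf (kSS_coins k)"
    from coins[OF c] show "ex_post_IC_IR k v (kSS_mech sel v c)"
    proof
      assume "\<exists>l\<in>{1..L}. c = Inl l"
      then obtain l where l: "l \<in> {1..L}" "c = Inl l" by blast
      have "kSS_mech sel v c = bucket_mech sel v l" using l by (simp add: kSS_mech_def fun_eq_iff)
      moreover have "(2::nat)^(l-1) < k" unfolding kL using l by (intro power_strict_increasing) auto
      ultimately show ?thesis using bucket_IC[OF V S] by simp
    next
      assume "\<exists>A. c = Inr A"
      then obtain A where A: "c = Inr A" by blast
      have "kSS_mech sel v c = sampling_mech sel v A" using A by (simp add: kSS_mech_def fun_eq_iff)
      then show ?thesis using sampling_IC[OF V S] by simp
    qed
  qed
  have part2: "opt_welfare v s / (2 * log 2 (real k) + 4)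
              \<le> measure_pmf.expectation (kSS_coins k)
                   (\<lambda>c. welfare (\<lambda>i T. v i T s) (fst (kSS_mech sel v c s)))"
    if s: "in_dom k s" for s
  proof -
    define w where "w = (\<lambda>i T. v i T s)"
    have finA: "finite {X :: 'a \<Rightarrow> 'b set. is_alloc X}" by simp
    have neA: "{X :: 'a \<Rightarrow> 'b set. is_alloc X} \<noteq> {}"
      using is_alloc_def[of "\<lambda>_. {}"] by auto
    have "opt_welfare v s \<in> (\<lambda>X. welfare w X) ` {X. is_alloc X}"
      unfolding opt_welfare_def w_def by (rule Max_in) (use finA neA in auto)
    then obtain Xs where Xs: "is_alloc Xs" "opt_welfare v s = welfare w Xs" by auto
    define D where "D = (\<lambda>i. v i (Xs i) s - v i (Xs i) (s(i:=0)))"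
    define Z where "Z = (\<lambda>i. v i (Xs i) (s(i:=0)))"
    define W where "W = (\<lambda>c. welfare w (fst (kSS_mech sel v c s)))"
    define N where "N = real (card (UNIV :: 'a set set))"
    have Npos: "0 < N" unfolding N_def by (simp add: card_gt_0_iff)
    have E: "measure_pmf.expectation (kSS_coins k) W
       = (\<Sum>l\<in>{1..L}. W (Inl l)) / (real L + 2) + (\<Sum>A\<in>UNIV. W (Inr A)) * (2 / (real L + 2)) / N"
      unfolding N_def by (rule kSS_expectation[OF lg L1])
    have opt: "opt_welfare v s = (\<Sum>i\<in>UNIV. D i) + (\<Sum>i\<in>UNIV. Z i)"
      unfolding Xs(2) welfare_def w_def D_def Z_def by (simp add: sum.distrib[symmetric])
    have Dn: "0 \<le> D i" for i unfolding D_def using vv_mono[OF V s, of "s(i:=0)"] by simp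
    have D0: "s i = 0 \<Longrightarrow> D i = 0" for i unfolding D_def by (simp add: fun_upd_idem)
    have sk: "s i < 2^L" for i using s kL unfolding in_dom_def by simp
    have B1: "(\<Sum>i\<in>UNIV. D i / 2) \<le> (\<Sum>l\<in>{1..L}. W (Inl l))"
    proof -
      have "(\<Sum>i\<in>UNIV. D i / 2) \<le> (\<Sum>l\<in>{1..L}. \<Sum>i\<in>UNIV. if 2^(l-1) \<le> s i \<and> s i < 2 * 2^(l-1) then D i / 2 else 0)"
        by (rule bucket_sum[OF Dn D0 sk])
      also have "\<dots> \<le> (\<Sum>l\<in>{1..L}. W (Inl l))"
      proof (rule sum_mono)
        fix l
        show "(\<Sum>i\<in>UNIV. if 2^(l-1) \<le> s i \<and> s i < 2 * 2^(l-1) then D i / 2 else 0) \<le> W (Inl l)"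
          unfolding W_def w_def D_def using bucket_welfare[OF V S s Xs(1), of l]
          by (simp add: kSS_mech_def)
      qed
      finally show ?thesis .
    qed
    have B2: "(\<Sum>i\<in>UNIV. N / 4 * Z i) \<le> (\<Sum>A\<in>UNIV. W (Inr A))"
    proof -
      have "(\<Sum>i\<in>UNIV. N / 4 * Z i) \<le> (\<Sum>i\<in>UNIV. \<Sum>A\<in>UNIV. if i \<notin> A then v i (Xs i) (\<lambda>j. if j \<in> A then s j else 0) else 0)"
      proof (rule sum_mono)
        fix i
        show "N / 4 * Z i \<le> (\<Sum>A\<in>UNIV. if i \<notin> A then v i (Xs i) (\<lambda>j. if j \<in> A then s j else 0) else 0)"
          unfolding N_def Z_def by (rule sampling_sum[OF vv_sos[OF V] vv_nonneg[OF V] s])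
      qed
      also have "\<dots> = (\<Sum>A\<in>UNIV. \<Sum>i\<in>UNIV. if i \<notin> A then v i (Xs i) (\<lambda>j. if j \<in> A then s j else 0) else 0)"
        by (rule sum.swap)
      also have "\<dots> \<le> (\<Sum>A\<in>UNIV. W (Inr A))"
      proof (rule sum_mono)
        fix A
        show "(\<Sum>i\<in>UNIV. if i \<notin> A then v i (Xs i) (\<lambda>j. if j \<in> A then s j else 0) else 0) \<le> W (Inr A)"
          unfolding W_def w_def using sampling_welfare[OF V S s Xs(1), of A]
          by (simp add: kSS_mech_def)
      qed
      finally show ?thesis .
    qed
    have lgk: "log 2 (real k) = real L" unfolding kL by (simp add: log_nat_power)
    have Lp: "0 < real L + 2" by simp
    have h1: "(\<Sum>i\<in>UNIV. D i / 2) / (real L + 2) \<le> (\<Sum>l\<in>{1..L}. W (Inl l)) / (real L + 2)"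
      by (rule divide_right_mono[OF B1]) (use Lp in simp)
    have h2: "(\<Sum>i\<in>UNIV. N / 4 * Z i) * (2 / (real L + 2)) / N \<le> (\<Sum>A\<in>UNIV. W (Inr A)) * (2 / (real L + 2)) / N"
      by (intro divide_right_mono mult_right_mono B2) (use Npos Lp in auto)
    have h3: "(\<Sum>i\<in>UNIV. N / 4 * Z i) * (2 / (real L + 2)) / N = (\<Sum>i\<in>UNIV. Z i) / (2 * (real L + 2))"
    proof -
      have hs: "(\<Sum>i\<in>UNIV. N / 4 * Z i) = N / 4 * (\<Sum>i\<in>UNIV. Z i)" by (simp add: sum_distrib_left)
      have t1: "0 < (N'::real) \<Longrightarrow> 0 < c \<Longrightarrow> N' / 4 * X * (2 / c) / N' = X / (2 * c)" for N' c X
        by (simp add: field_simps)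
      show ?thesis unfolding hs by (rule t1[OF Npos Lp])
    qed
    have h4: "opt_welfare v s / (2 * log 2 (real k) + 4)
       = (\<Sum>i\<in>UNIV. D i / 2) / (real L + 2) + (\<Sum>i\<in>UNIV. Z i) / (2 * (real L + 2))"
    proof -
      have t2: "0 < c \<Longrightarrow> (a + b) / (2 * c) = (a / 2) / c + b / (2 * c)" for a b c :: real
        by (simp add: field_simps)
      have sd: "(\<Sum>i\<in>UNIV. D i / 2) = (\<Sum>i\<in>UNIV. D i) / 2" by (simp add: sum_divide_distrib)
      have e: "2 * real L + 4 = 2 * (real L + 2)" by simp
      show ?thesis unfolding opt lgk e t2[OF Lp] sd by (rule refl)
    qed
    show ?thesis using E h1 h2 h3 h4 unfolding W_def w_def by linarith
  qed
  show ?thesis using part1 part2 by blast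
qed


end
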